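(* In the abruptly-changing incentivized bandit with reward drift where the principal uses Sliding Window UCB with window $\tau$ (as in the context), for all arms $a\in\{1,\dots,K\}$ and all $t\in\{1,\dots,T\}$, $$D_t(\tau,a)\le l\,N_t(a)\sqrt{\xi\log(\min(t,\tau))}.$$
   Context: Arms $\{1,\dots,K\}$, horizon $T$; true rewards $X_t(a)\in[0,1]$ independent with means $\mu_t(a)$. Protocol: the principal recommends $a_t$ by Sliding Window UCB; greedy choice $g_t=\arg\max_a\bar X_t(\tau,a)$; if $a_t\ne g_t$ the principal pays $\chi_t=\bar X_t(\tau,g_t)-\bar X_t(\tau,a_t)$ and the observed reward is $r_t=X_t(a_t)+\delta_t$, $\delta_t=f_t(\chi_t)$; otherwise $\delta_t=0$, $r_t=X_t(a_t)$. Each $f_t$ is non-decreasing, $f_t(0)=0$, Lipschitz with constant $l_t$; $l=\max_tl_t$. Sliding Window UCB (window $\tau$, constant $\xi$): $N_t(\tau,a)$ = number of pulls of $a$ in the last $\tau$ rounds, $\bar X_t(\tau,a)$ = average observed reward of $a$ over those rounds, $c_t(\tau,a)=\sqrt{\xi\log(\min(t,\tau))/N_t(\tau,a)}$; pull arm $t$ for $t\le K$, then $\arg\max_a\bar X_t(\tau,a)+c_t(\tau,a)$. $N_t(a)=\sum_{s\le t}\mathbf1(a_s=a)$, and $D_t(\tau,a)=\sum_{s\le t}\mathbf1(a_s=a)\delta_s$ is the total reward drift contributed by arm $a$ up to time $t$. *)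

theory Defs
  imports Complex_Main
begin

text \<open>Rounds are numbered 1,2,...; arms are 1..K. act s is the recommended (pulled)
arm a_s, r s the observed reward r_s.\<close>

definition arms :: "nat \<Rightarrow> nat set" where
  "arms K = {1..K}"

definition window :: "nat \<Rightarrow> nat \<Rightarrow> nat set" where
  "window tau t = {s. 1 \<le> s \<and> s < t \<and> t \<le> s + tau}"

definition Nwin :: "nat \<Rightarrow> (nat \<Rightarrow> nat) \<Rightarrow> nat \<Rightarrow> nat \<Rightarrow> nat" where
  "Nwin tau act t a = card {s \<in> window tau t. act s = a}"

text \<open>bar X_t(tau,a): average observed reward of arm a over those rounds
(only meaningful when Nwin > 0).\<close>
definition Xbar :: "nat \<Rightarrow> (nat \<Rightarrow> nat) \<Rightarrow> (nat \<Rightarrow> real) \<Rightarrow> nat \<Rightarrow> nat \<Rightarrow> real" where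
  "Xbar tau act r t a = (\<Sum>s\<in>{s \<in> window tau t. act s = a}. r s) / real (Nwin tau act t a)"

definition cw :: "real \<Rightarrow> nat \<Rightarrow> (nat \<Rightarrow> nat) \<Rightarrow> nat \<Rightarrow> nat \<Rightarrow> real" where
  "cw xi tau act t a = sqrt (xi * ln (real (min t tau)) / real (Nwin tau act t a))"

definition Ntot :: "(nat \<Rightarrow> nat) \<Rightarrow> nat \<Rightarrow> nat \<Rightarrow> nat" where
  "Ntot act t a = card {s \<in> {1..t}. act s = a}"

definition Drift :: "(nat \<Rightarrow> nat) \<Rightarrow> (nat \<Rightarrow> real) \<Rightarrow> nat \<Rightarrow> nat \<Rightarrow> real" where
  "Drift act \<delta> t a = (\<Sum>s\<in>{1..t}. if act s = a then \<delta> s else 0)"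

end

theory Submission
  imports Defs
begin

theorem lemma4:
  fixes K T tau :: nat and xi l :: real
    and X :: "nat \<Rightarrow> nat \<Rightarrow> real"
    and f :: "nat \<Rightarrow> real \<Rightarrow> real" and lc :: "nat \<Rightarrow> real"
    and act g :: "nat \<Rightarrow> nat" and r \<chi> \<delta> :: "nat \<Rightarrow> real"
  assumes K_pos: "1 \<le> K" and tau_pos: "1 \<le> tau" and xi_pos: "0 < xi"
    and rewards: "\<And>t a. t \<in> {1..T} \<Longrightarrow> a \<in> arms K \<Longrightarrow> 0 \<le> X t a \<and> X t a \<le> 1"
    and f_mono: "\<And>t. mono (f t)"
    and f_zero: "\<And>t. f t 0 = 0"
    and f_lip: "\<And>t x y. \<bar>f t x - f t y\<bar> \<le> lc t * \<bar>x - y\<bar>"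
    and l_def: "l = (MAX t\<in>{1..T}. lc t)"
    and act_arm: "\<And>t. t \<in> {1..T} \<Longrightarrow> act t \<in> arms K"
    and act_init: "\<And>t. t \<in> {1..T} \<Longrightarrow> t \<le> K \<Longrightarrow> act t = t"
    and act_unexplored: "\<And>t. t \<in> {1..T} \<Longrightarrow> K < t \<Longrightarrow>
          (\<exists>b\<in>arms K. Nwin tau act t b = 0) \<Longrightarrow> Nwin tau act t (act t) = 0"
    and act_ucb: "\<And>t b. t \<in> {1..T} \<Longrightarrow> K < t \<Longrightarrow>
          (\<forall>b'\<in>arms K. 0 < Nwin tau act t b') \<Longrightarrow> b \<in> arms K \<Longrightarrow>
          Xbar tau act r t b + cw xi tau act t b
            \<le> Xbar tau act r t (act t) + cw xi tau act t (act t)"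
    and greedy: "\<And>t. t \<in> {1..T} \<Longrightarrow> 0 < Nwin tau act t (act t) \<Longrightarrow>
          g t \<in> arms K \<and> 0 < Nwin tau act t (g t) \<and>
          (\<forall>b\<in>arms K. 0 < Nwin tau act t b \<longrightarrow> Xbar tau act r t b \<le> Xbar tau act r t (g t))"
    and chi_def: "\<And>t. t \<in> {1..T} \<Longrightarrow> \<chi> t =
          (if 0 < Nwin tau act t (act t) \<and> act t \<noteq> g t
           then Xbar tau act r t (g t) - Xbar tau act r t (act t) else 0)"
    and delta_def: "\<And>t. t \<in> {1..T} \<Longrightarrow> \<delta> t =
          (if 0 < Nwin tau act t (act t) \<and> act t \<noteq> g t then f t (\<chi> t) else 0)"
    and obs: "\<And>t. t \<in> {1..T} \<Longrightarrow> r t = X t (act t) + \<delta> t"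
  shows "\<forall>a\<in>arms K. \<forall>t\<in>{1..T}.
           Drift act \<delta> t a \<le> l * real (Ntot act t a) * sqrt (xi * ln (real (min t tau)))"

proof -
  have lc_nn: "0 \<le> lc t" for t
  proof -
    have "\<bar>f t 1 - f t 0\<bar> \<le> lc t * \<bar>1 - 0\<bar>" by (rule f_lip)
    thus ?thesis by simp
  qed
  have lnn: "0 \<le> ln (real (min s tau))" if "1 \<le> s" for s
    using that tau_pos by simp
  have cw_nn: "0 \<le> cw xi tau act s b" if "1 \<le> s" for s b
    unfolding cw_def using lnn[OF that] xi_pos by simp
  have key: "\<delta> s \<le> lc s * sqrt (xi * ln (real (min s tau)))" if s: "s \<in> {1..T}" for s
  proof (cases "0 < Nwin tau act s (act s) \<and> act s \<noteq> g s")
    case False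
    then have "\<delta> s = 0" using delta_def[OF s] by auto
    then show ?thesis using lc_nn[of s] lnn[of s] xi_pos s by simp
  next
    case True
    have sK: "K < s"
    proof (rule ccontr)
      assume "\<not> K < s"
      then have a: "act s = s" using act_init[OF s] by simp
      have "{s' \<in> window tau s. act s' = s} = {}"
      proof (rule ccontr)
        assume "{s' \<in> window tau s. act s' = s} \<noteq> {}"
        then obtain s' where "s' \<in> window tau s" "act s' = s" by auto
        moreover have "act s' = s'" using \<open>s' \<in> window tau s\<close> \<open>\<not> K < s\<close> s
          by (intro act_init) (auto simp: window_def)
        ultimately show False by (auto simp: window_def)
      qed
      then have "Nwin tau act s (act s) = 0" using a by (simp only: Nwin_def) simp
      with True show False by simp
    qed
    have allpos: "\<forall>b'\<in>arms K. 0 < Nwin tau act s b'"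
      using act_unexplored[OF s sK] True by (metis gr0I)
    have gs: "g s \<in> arms K" using greedy[OF s] True by simp
    have ucb: "Xbar tau act r s (g s) + cw xi tau act s (g s)
            \<le> Xbar tau act r s (act s) + cw xi tau act s (act s)"
      by (rule act_ucb[OF s sK allpos gs])
    have chi: "\<chi> s = Xbar tau act r s (g s) - Xbar tau act r s (act s)"
      using chi_def[OF s] True by simp
    have s1: "1 \<le> s" using s by simp
    have chi_le: "\<chi> s \<le> cw xi tau act s (act s)"
      using ucb chi cw_nn[OF s1, of "g s"] by linarith
    have Npos: "1 \<le> real (Nwin tau act s (act s))" using True by simp
    have cw_le: "cw xi tau act s (act s) \<le> sqrt (xi * ln (real (min s tau)))"
      unfolding cw_def
    proof (rule real_sqrt_le_mono)
      have "0 \<le> xi * ln (real (min s tau))" using xi_pos lnn[OF s1] by simp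
      then show "xi * ln (real (min s tau)) / real (Nwin tau act s (act s)) \<le> xi * ln (real (min s tau))"
        using Npos by (simp add: divide_le_eq mult_le_cancel_left1)
    qed
    have d: "\<delta> s = f s (\<chi> s)" using delta_def[OF s] True by simp
    show ?thesis
    proof (cases "0 \<le> \<chi> s")
      case True
      have "f s (\<chi> s) \<le> \<bar>f s (\<chi> s) - f s 0\<bar>" using f_zero by simp
      also have "\<dots> \<le> lc s * \<bar>\<chi> s - 0\<bar>" by (rule f_lip)
      also have "\<dots> = lc s * \<chi> s" using True by simp
      also have "\<dots> \<le> lc s * sqrt (xi * ln (real (min s tau)))"
        using chi_le cw_le lc_nn[of s] by (intro mult_left_mono) auto
      finally show ?thesis using d by simp
    next
      case False
      have "f s (\<chi> s) \<le> f s 0" using f_mono[of s] False by (simp add: mono_def)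
      then have "\<delta> s \<le> 0" using d f_zero by simp
      moreover have "0 \<le> lc s * sqrt (xi * ln (real (min s tau)))"
        using lc_nn[of s] lnn[OF s1] xi_pos by simp
      ultimately show ?thesis by linarith
    qed
  qed
  show ?thesis
  proof (intro ballI)
    fix a t assume a: "a \<in> arms K" and t: "t \<in> {1..T}"
    define B where "B = l * sqrt (xi * ln (real (min t tau)))"
    have bound: "\<delta> s \<le> B" if s: "s \<in> {1..t}" for s
    proof -
      have sT: "s \<in> {1..T}" using s t by auto
      have lcl: "lc s \<le> l" unfolding l_def using sT by (intro Max_ge) auto
      have "ln (real (min s tau)) \<le> ln (real (min t tau))"
        using s tau_pos by (auto simp: min_def)
      then have "sqrt (xi * ln (real (min s tau))) \<le> sqrt (xi * ln (real (min t tau)))"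
        using xi_pos by simp
      moreover have "0 \<le> sqrt (xi * ln (real (min s tau)))" using lnn[of s] s xi_pos by simp
      ultimately have "lc s * sqrt (xi * ln (real (min s tau))) \<le> l * sqrt (xi * ln (real (min t tau)))"
        using lcl lc_nn[of s] by (meson mult_mono order_trans)
      then show ?thesis using key[OF sT] unfolding B_def by linarith
    qed
    have "Drift act \<delta> t a = (\<Sum>s\<in>{s \<in> {1..t}. act s = a}. \<delta> s)"
      unfolding Drift_def by (rule sum.inter_filter[symmetric]) simp
    also have "\<dots> \<le> real (card {s \<in> {1..t}. act s = a}) * B"
      by (rule sum_bounded_above) (use bound in auto)
    finally show "Drift act \<delta> t a \<le> l * real (Ntot act t a) * sqrt (xi * ln (real (min t tau)))"
      unfolding Ntot_def B_def by (simp add: mult_ac)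
  qed
qed

end
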